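(* Let $X$ be a simplicial complex and let $\gamma$ be an $i$-non-skipping simple cycle in $X$. Then any test for list agreement of $1$-dimensional $2$-assignments on $X$ must perform at least $|\gamma|/i$ queries.
   Context: A $1$-dimensional $2$-assignment on $X$ gives each edge $e\in X(1)$ two functions $L^e_1,L^e_2:e\to\{0,1\}$; it is agreeing if there are $g_1,g_2:X(0)\to\{0,1\}$ and for each edge a permutation $\pi_e$ of $\{1,2\}$ with $L^e_{\pi_e(i)}=g_i|_e$. A query is an edge and returns both local functions on it. A test for list agreement is a randomized, possibly adaptive algorithm that accepts every agreeing $2$-assignment with probability $1$ and rejects every non-agreeing one with positive probability (no locally-differing assumption is made). A simple cycle $\gamma=(\gamma_0,\dots,\gamma_{n-1})$ in the graph $(X(0),X(1))$ has length $|\gamma|=n$ (indices mod $n$); $\mathrm{dist}_\gamma$ is the distance along the cycle. An edge $e=\{\gamma_a,\gamma_b\}\in X(1)$ skips the cycle edge $\{\gamma_c,\gamma_{c+1}\}$ if $\mathrm{dist}_\gamma(\gamma_a,\gamma_b)=\mathrm{dist}_\gamma(\gamma_a,\gamma_c)+\mathrm{dist}_\gamma(\gamma_{c+1},\gamma_b)+1$ (i.e. the cycle edge lies on a shortest arc of $\gamma$ between the endpoints of $e$). $\gamma$ is $i$-non-skipping if every edge of $X$ with both endpoints on $\gamma$ skips at most $i$ cycle edges. *)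

theory Defs
  imports "HOL-Probability.Probability"
begin

definition simp_complex :: "'v set set \<Rightarrow> bool" where
  "simp_complex X \<longleftrightarrow>
     (\<forall>s\<in>X. finite s) \<and> (\<forall>s\<in>X. \<forall>t. t \<subseteq> s \<longrightarrow> t \<noteq> {} \<longrightarrow> t \<in> X)"

definition verts :: "'v set set \<Rightarrow> 'v set" where
  "verts X = {v. {v} \<in> X}"

definition edges :: "'v set set \<Rightarrow> 'v set set" where
  "edges X = {e \<in> X. card e = 2}"

text \<open>A 2-assignment is a pair (L1, L2); on each edge e the local functions are
  L1 e and L2 e restricted to e (values outside e or on non-edges are irrelevant).\<close>
type_synonym 'v assignment = "('v set \<Rightarrow> 'v \<Rightarrow> bool) \<times> ('v set \<Rightarrow> 'v \<Rightarrow> bool)"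

definition agreeing :: "'v set set \<Rightarrow> 'v assignment \<Rightarrow> bool" where
  "agreeing X L \<longleftrightarrow>
     (\<exists>g1 g2 :: 'v \<Rightarrow> bool. \<forall>e\<in>edges X.
        (\<forall>v\<in>e. fst L e v = g1 v \<and> snd L e v = g2 v) \<or>
        (\<forall>v\<in>e. fst L e v = g2 v \<and> snd L e v = g1 v))"

definition answer :: "'v assignment \<Rightarrow> 'v set \<Rightarrow> ('v \<Rightarrow> bool) \<times> ('v \<Rightarrow> bool)" where
  "answer L e = ((\<lambda>v. if v \<in> e then fst L e v else False),
                 (\<lambda>v. if v \<in> e then snd L e v else False))"

datatype 'v qtree =
    Decide bool
  | Query "'v set" "('v \<Rightarrow> bool) \<times> ('v \<Rightarrow> bool) \<Rightarrow> 'v qtree"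

primrec run :: "'v qtree \<Rightarrow> 'v assignment \<Rightarrow> bool" where
  "run (Decide b) L = b"
| "run (Query e f) L = run (f (answer L e)) L"

primrec nqueries :: "'v qtree \<Rightarrow> 'v assignment \<Rightarrow> nat" where
  "nqueries (Decide b) L = 0"
| "nqueries (Query e f) L = Suc (nqueries (f (answer L e)) L)"

primrec valid_tree :: "'v set set \<Rightarrow> 'v qtree \<Rightarrow> bool" where
  "valid_tree X (Decide b) = True"
| "valid_tree X (Query e f) = (e \<in> edges X \<and> (\<forall>a. valid_tree X (f a)))"

text \<open>A randomized adaptive test = probability distribution over deterministic
  adaptive algorithms querying edges of X.\<close>
definition list_agreement_test :: "'v set set \<Rightarrow> 'v qtree pmf \<Rightarrow> bool" where
  "list_agreement_test X T \<longleftrightarrow>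
     (\<forall>t\<in>set_pmf T. valid_tree X t) \<and>
     (\<forall>L. agreeing X L \<longrightarrow> measure_pmf.prob T {t. run t L} = 1) \<and>
     (\<forall>L. \<not> agreeing X L \<longrightarrow> measure_pmf.prob T {t. \<not> run t L} > 0)"

definition max_queries :: "'v qtree pmf \<Rightarrow> nat \<Rightarrow> bool" where
  "max_queries T q \<longleftrightarrow> (\<forall>t\<in>set_pmf T. \<forall>L. nqueries t L \<le> q)"

definition simple_cycle :: "'v set set \<Rightarrow> 'v list \<Rightarrow> bool" where
  "simple_cycle X \<gamma> \<longleftrightarrow> distinct \<gamma> \<and> length \<gamma> \<ge> 3 \<and> set \<gamma> \<subseteq> verts X \<and>
     (\<forall>k < length \<gamma>. {\<gamma> ! k, \<gamma> ! ((k + 1) mod length \<gamma>)} \<in> edges X)"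

definition cdist :: "nat \<Rightarrow> nat \<Rightarrow> nat \<Rightarrow> nat" where
  "cdist n a b = min ((a + n - b) mod n) ((b + n - a) mod n)"

definition skips :: "'v list \<Rightarrow> 'v set \<Rightarrow> nat \<Rightarrow> bool" where
  "skips \<gamma> e c \<longleftrightarrow> (let n = length \<gamma> in
     \<exists>a<n. \<exists>b<n. e = {\<gamma> ! a, \<gamma> ! b} \<and>
       cdist n a b = cdist n a c + cdist n ((c + 1) mod n) b + 1)"

definition non_skipping :: "'v set set \<Rightarrow> 'v list \<Rightarrow> nat \<Rightarrow> bool" where
  "non_skipping X \<gamma> i \<longleftrightarrow>
     (\<forall>e\<in>edges X. e \<subseteq> set \<gamma> \<longrightarrow> card {c. c < length \<gamma> \<and> skips \<gamma> e c} \<le> i)"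

end

theory Submission
  imports Defs
begin

definition pos :: "'v list \<Rightarrow> 'v \<Rightarrow> nat" where
  "pos g v = (THE k. k < length g \<and> g ! k = v)"

lemma pos_nth: "distinct g \<Longrightarrow> k < length g \<Longrightarrow> pos g (g ! k) = k"
  unfolding pos_def by (rule the_equality) (auto simp: nth_eq_iff_index_eq)

definition tw :: "'v list \<Rightarrow> 'v set \<Rightarrow> bool" where
  "tw g e = (e \<subseteq> set g \<and> (\<exists>u\<in>e. \<exists>w\<in>e. pos g u < pos g w \<and> 2*(pos g w - pos g u) > length g))"

definition Lfst :: "'v list \<Rightarrow> 'v set \<Rightarrow> 'v \<Rightarrow> bool" where
  "Lfst g e v = (v \<in> set g \<and> tw g e \<and> (\<forall>u\<in>e. pos g u \<le> pos g v))"

definition Lsnd :: "'v list \<Rightarrow> 'v set \<Rightarrow> 'v \<Rightarrow> bool" where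
  "Lsnd g e v = (v \<in> set g \<and> \<not> Lfst g e v)"

definition G1 :: "'v list \<Rightarrow> nat \<Rightarrow> 'v \<Rightarrow> bool" where
  "G1 g c v = (v \<in> set g \<and> pos g v \<le> c)"
definition G2 :: "'v list \<Rightarrow> nat \<Rightarrow> 'v \<Rightarrow> bool" where
  "G2 g c v = (v \<in> set g \<and> \<not> pos g v \<le> c)"

lemma cdist_eq: "a < n \<Longrightarrow> b < n \<Longrightarrow>
  cdist n a b = min (if a \<le> b then b - a else a - b) (n - (if a \<le> b then b - a else a - b))"
proof -
  assume "a < n" "b < n"
  then have 1: "(a + n - b) mod n = (if b \<le> a then a - b else a + n - b)"
    by (auto simp: mod_if le_mod_geq)
  from \<open>a<n\<close> \<open>b<n\<close> have 2: "(b + n - a) mod n = (if a \<le> b then b - a else b + n - a)"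
    by (auto simp: mod_if le_mod_geq)
  show ?thesis unfolding cdist_def 1 2 using \<open>a<n\<close> \<open>b<n\<close> by auto
qed

lemma tw_ab:
  assumes "distinct g" "a < b" "b < length g"
  shows "tw g {g!a, g!b} \<longleftrightarrow> 2*(b-a) > length g"
  using assms by (auto simp: tw_def pos_nth)

lemma cdist_le1: "a \<le> b \<Longrightarrow> b < n \<Longrightarrow> cdist n a b = min (b-a) (n-(b-a))"
  by (simp add: cdist_eq)
lemma cdist_le2: "a \<le> b \<Longrightarrow> b < n \<Longrightarrow> cdist n b a = min (b-a) (n-(b-a))"
  by (auto simp add: cdist_eq)

lemma match_in:
  assumes d: "distinct g" and ab: "a < b" "b < length g" and c: "c < length g"
    and ns: "\<not> skips g {g!a, g!b} c"
  shows "tw g {g!a, g!b} \<longleftrightarrow> (a \<le> c \<and> c < b)"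
proof
  assume t: "tw g {g!a, g!b}"
  let ?n = "length g"
  have t': "2*(b-a) > ?n" using tw_ab[OF assms(1-3)] t by simp
  show "a \<le> c \<and> c < b"
  proof (rule ccontr)
    assume nc: "\<not> (a \<le> c \<and> c < b)"
    have e1: "cdist ?n b a = ?n - (b - a)" using cdist_le2[of a b ?n] ab t' by simp
    have "cdist ?n b a = cdist ?n b c + cdist ?n ((c + 1) mod ?n) a + 1"
    proof (cases "c = ?n - 1")
      case True
      then have "c+1 = ?n" using c by simp
      then have m: "(c+1) mod ?n = 0" by simp
      have e2: "cdist ?n b c = c - b" using cdist_le1[of b c ?n] True ab c t' by simp
      have e3: "cdist ?n 0 a = a" using cdist_le1[of 0 a ?n] True ab c t' by simp
      show ?thesis unfolding m e1 e2 e3 using True ab c t' by simp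
    next
      case False
      then have m: "(c+1) mod ?n = c + 1" using c by simp
      show ?thesis
      proof (cases "b \<le> c")
        case True
        have e2: "cdist ?n b c = c - b" using cdist_le1[of b c ?n] True ab c t' by simp
        have e3: "cdist ?n (c+1) a = ?n - (c + 1 - a)" using cdist_le2[of a "c+1" ?n] True False ab c t' by simp
        show ?thesis unfolding m e1 e2 e3 using True ab c t' by simp
      next
        case False2: False
        then have ca: "c < a" using nc by simp
        have e2: "cdist ?n b c = ?n - (b - c)" using cdist_le2[of c b ?n] ca ab c t' by simp
        have e3: "cdist ?n (c+1) a = a - (c + 1)" using cdist_le1[of "c+1" a ?n] ca ab c t' by simp
        show ?thesis unfolding m e1 e2 e3 using ca ab c t' by simp
      qed
    qed
    then have "b < ?n \<and> a < ?n \<and> {g!a, g!b} = {g!b, g!a} \<and> cdist ?n b a = cdist ?n b c + cdist ?n ((c + 1) mod ?n) a + 1"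
      using ab by (simp add: insert_commute)
    then have "skips g {g!a, g!b} c" unfolding skips_def Let_def by blast
    then show False using ns by simp
  qed
next
  assume ac: "a \<le> c \<and> c < b"
  show "tw g {g!a, g!b}"
  proof (rule ccontr)
    assume "\<not> tw g {g!a, g!b}"
    then have t': "\<not> 2*(b-a) > length g" using tw_ab[OF assms(1-3)] by simp
    let ?n = "length g"
    have m: "(c+1) mod ?n = c + 1" using ac ab by simp
    have e1: "cdist ?n a b = b - a" using cdist_le1[of a b ?n] ab t' by simp
    have aux: "2*(c-a) \<le> ?n" using ac t' by linarith
    have e2: "cdist ?n a c = c - a" using cdist_le1[of a c ?n] aux ac ab by (simp add: min_def)
    have aux2: "2*(b-(c+1)) \<le> ?n" using ac t' by linarith
    have e3: "cdist ?n (c+1) b = b - (c+1)" using cdist_le1[of "c+1" b ?n] aux2 ac ab by (simp add: min_def)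
    have "cdist ?n a b = cdist ?n a c + cdist ?n ((c + 1) mod ?n) b + 1"
      unfolding m e1 e2 e3 using ac by (simp, linarith)
    then have "b < ?n \<and> a < ?n \<and> cdist ?n a b = cdist ?n a c + cdist ?n ((c + 1) mod ?n) b + 1"
      using ab by simp
    then have "skips g {g!a, g!b} c" unfolding skips_def Let_def by blast
    then show False using ns by simp
  qed
qed


definition opt1 :: "'v list \<Rightarrow> nat \<Rightarrow> 'v set \<Rightarrow> bool" where
  "opt1 g c e = (\<forall>v\<in>e. Lfst g e v = G1 g c v \<and> Lsnd g e v = G2 g c v)"
definition opt2 :: "'v list \<Rightarrow> nat \<Rightarrow> 'v set \<Rightarrow> bool" where
  "opt2 g c e = (\<forall>v\<in>e. Lfst g e v = G2 g c v \<and> Lsnd g e v = G1 g c v)"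

lemma match_ab:
  assumes d: "distinct g" and ab: "a < b" "b < length g" and c: "c < length g"
    and ns: "\<not> skips g {g!a, g!b} c"
  shows "opt1 g c {g!a, g!b} \<or> opt2 g c {g!a, g!b}"
proof -
  let ?e = "{g!a, g!b}"
  have pa: "pos g (g!a) = a" and pb: "pos g (g!b) = b" using d ab by (auto simp: pos_nth)
  have ina: "g!a \<in> set g" and inb: "g!b \<in> set g" using ab by auto
  have fa: "\<not> Lfst g ?e (g!a)" unfolding Lfst_def using pa pb ab by auto
  have fb: "Lfst g ?e (g!b) = tw g ?e" unfolding Lfst_def using pa pb ab inb by auto
  have m: "tw g ?e \<longleftrightarrow> (a \<le> c \<and> c < b)" by (rule match_in[OF assms])
  show ?thesis
    unfolding opt1_def opt2_def Lsnd_def G1_def G2_def using fa fb m pa pb ina inb ab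
    by auto
qed

lemma match_edge:
  assumes d: "distinct g" and e: "card e = 2" and c: "c < length g"
    and ns: "e \<subseteq> set g \<Longrightarrow> \<not> skips g e c"
  shows "opt1 g c e \<or> opt2 g c e"
proof -
  obtain x y where xy: "x \<noteq> y" "e = {x, y}" using e by (auto simp: card_2_iff)
  show ?thesis
  proof (cases "e \<subseteq> set g")
    case True
    then obtain i j where ij: "i < length g" "j < length g" "x = g!i" "y = g!j"
      using xy by (auto simp: in_set_conv_nth)
    have "i \<noteq> j" using ij xy by auto
    then show ?thesis
    proof (cases "i < j")
      case True
      then show ?thesis using match_ab[OF d True ij(2) c] ns xy ij \<open>e \<subseteq> set g\<close> by simp
    next
      case False
      then have "j < i" using \<open>i \<noteq> j\<close> by simp
      moreover have "e = {g!j, g!i}" using xy ij by auto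
      ultimately show ?thesis using match_ab[OF d \<open>j<i\<close> ij(1) c] ns \<open>e \<subseteq> set g\<close> by simp
    qed
  next
    case False
    then have ntw: "\<not> tw g e" unfolding tw_def by simp
    then have lf: "\<And>v. \<not> Lfst g e v" unfolding Lfst_def by simp
    show ?thesis
    proof (cases "\<exists>v\<in>e. v \<in> set g \<and> pos g v \<le> c")
      case True
      then obtain v where v: "v \<in> e" "v \<in> set g" "pos g v \<le> c" by blast
      have "\<forall>w\<in>e. w \<noteq> v \<longrightarrow> w \<notin> set g" using False xy v by auto
      then have "opt2 g c e" unfolding opt2_def Lsnd_def G1_def G2_def using lf v by auto
      then show ?thesis by simp
    next
      case False
      then have "opt1 g c e" unfolding opt1_def Lsnd_def G1_def G2_def using lf by auto
      then show ?thesis by simp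
    qed
  qed
qed

definition Lgood :: "'v list \<Rightarrow> nat \<Rightarrow> 'v assignment" where
  "Lgood g c = ((\<lambda>e. if opt2 g c e then G2 g c else G1 g c), (\<lambda>e. if opt2 g c e then G1 g c else G2 g c))"

definition Lbad :: "'v list \<Rightarrow> 'v assignment" where
  "Lbad g = (Lfst g, Lsnd g)"

lemma Lgood_agree: "agreeing X (Lgood g c)"
  unfolding agreeing_def Lgood_def by (rule exI[of _ "G1 g c"], rule exI[of _ "G2 g c"]) auto

lemma Lgood_answer:
  assumes "opt1 g c e \<or> opt2 g c e"
  shows "answer (Lgood g c) e = answer (Lbad g) e"
  using assms unfolding answer_def Lgood_def Lbad_def opt1_def opt2_def by (auto simp: fun_eq_iff)

primrec qset :: "'v qtree \<Rightarrow> 'v assignment \<Rightarrow> 'v set set" where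
  "qset (Decide b) L = {}"
| "qset (Query e f) L = insert e (qset (f (answer L e)) L)"

lemma qset_card: "finite (qset t L) \<and> card (qset t L) \<le> nqueries t L"
proof (induction t)
  case (Query e f)
  have "finite (qset (f (answer L e)) L) \<and> card (qset (f (answer L e)) L) \<le> nqueries (f (answer L e)) L"
    by (rule Query.IH[OF rangeI])
  then show ?case by (simp add: card_insert_if)
qed simp

lemma qset_valid: "valid_tree X t \<Longrightarrow> qset t L \<subseteq> edges X"
proof (induction t)
  case (Query e f)
  have "qset (f (answer L e)) L \<subseteq> edges X"
    using Query.prems by (intro Query.IH[OF rangeI]) (simp, metis prod.collapse)
  then show ?case using Query.prems by simp
qed simp

lemma run_same: "(\<forall>e\<in>qset t L. answer L' e = answer L e) \<Longrightarrow> run t L' = run t L"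
  by (induction t) auto


lemma Lfst_ab:
  assumes d: "distinct g" and ab: "a < b" "b < length g"
  shows "\<not> Lfst g {g!a, g!b} (g!a)" "Lfst g {g!a, g!b} (g!b) \<longleftrightarrow> 2*(b-a) > length g"
    "Lsnd g {g!a, g!b} (g!a)" "Lsnd g {g!a, g!b} (g!b) \<longleftrightarrow> \<not> 2*(b-a) > length g"
proof -
  have pa: "pos g (g!a) = a" and pb: "pos g (g!b) = b" using d ab by (auto simp: pos_nth)
  have ina: "g!a \<in> set g" and inb: "g!b \<in> set g" using ab by auto
  show 1: "\<not> Lfst g {g!a, g!b} (g!a)" unfolding Lfst_def using pa pb ab by auto
  show 2: "Lfst g {g!a, g!b} (g!b) \<longleftrightarrow> 2*(b-a) > length g"
    unfolding Lfst_def using pa pb ab inb tw_ab[OF assms] by auto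
  show "Lsnd g {g!a, g!b} (g!a)" unfolding Lsnd_def using 1 ina by simp
  show "Lsnd g {g!a, g!b} (g!b) \<longleftrightarrow> \<not> 2*(b-a) > length g" unfolding Lsnd_def using 2 inb by simp
qed

lemma bad_nonagree:
  assumes d: "distinct g" and n3: "length g \<ge> 3"
    and cyc: "\<forall>k < length g. {g ! k, g ! ((k + 1) mod length g)} \<in> edges X"
  shows "\<not> agreeing X (Lbad g)"
proof
  assume "agreeing X (Lbad g)"
  then obtain g1 g2 :: "'a \<Rightarrow> bool" where P: "\<forall>e\<in>edges X.
        (\<forall>v\<in>e. Lfst g e v = g1 v \<and> Lsnd g e v = g2 v) \<or>
        (\<forall>v\<in>e. Lfst g e v = g2 v \<and> Lsnd g e v = g1 v)"
    unfolding agreeing_def Lbad_def by auto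
  let ?n = "length g"
  have step: "g1 (g!k) = g1 (g!(k+1))" if k: "k + 1 < ?n" for k
  proof -
    have "(k+1) mod ?n = k + 1" using k by simp
    then have "{g!k, g!(k+1)} \<in> edges X" using cyc k by (metis add_lessD1)
    then have P': "(\<forall>v\<in>{g!k, g!(k+1)}. Lfst g {g!k, g!(k+1)} v = g1 v \<and> Lsnd g {g!k, g!(k+1)} v = g2 v) \<or>
        (\<forall>v\<in>{g!k, g!(k+1)}. Lfst g {g!k, g!(k+1)} v = g2 v \<and> Lsnd g {g!k, g!(k+1)} v = g1 v)"
      using P by blast
    have "k < k+1" by simp
    note L = Lfst_ab[OF d this k]
    have "\<not> 2*(k+1-k) > ?n" using n3 by simp
    then show ?thesis using P' L by auto
  qed
  have all: "k < ?n \<Longrightarrow> g1 (g!k) = g1 (g!0)" for k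
  proof (induction k)
    case (Suc k)
    then have "g1 (g!k) = g1 (g!0)" by simp
    then show ?case using step[of k] Suc.prems by simp
  qed simp
  have "?n - 1 < ?n" using n3 by auto
  have "?n - 1 + 1 = ?n" using n3 by auto
  then have "(?n - 1 + 1) mod ?n = 0" by simp
  then have "{g!(?n-1), g!0} \<in> edges X" using cyc \<open>?n - 1 < ?n\<close> by metis
  then have E: "{g!0, g!(?n-1)} \<in> edges X" by (simp add: insert_commute)
  then have P': "(\<forall>v\<in>{g!0, g!(?n-1)}. Lfst g {g!0, g!(?n-1)} v = g1 v \<and> Lsnd g {g!0, g!(?n-1)} v = g2 v) \<or>
        (\<forall>v\<in>{g!0, g!(?n-1)}. Lfst g {g!0, g!(?n-1)} v = g2 v \<and> Lsnd g {g!0, g!(?n-1)} v = g1 v)"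
    using P by blast
  have "0 < ?n - 1" "?n - 1 < ?n" using n3 by auto
  note L = Lfst_ab[OF d this]
  have "2*(?n - 1 - 0) > ?n" using n3 by simp
  then have "g1 (g!0) \<noteq> g1 (g!(?n-1))" using P' L by auto
  moreover have "g1 (g!(?n-1)) = g1 (g!0)" using all[of "?n - 1"] n3 by simp
  ultimately show False by simp
qed

lemma skips_sub: "skips g e c \<Longrightarrow> e \<subseteq> set g"
  unfolding skips_def Let_def by auto

theorem mainTheorem9:
  fixes X :: "'v set set" and \<gamma> :: "'v list" and i q :: nat and T :: "'v qtree pmf"
  assumes "simp_complex X"
    and "simple_cycle X \<gamma>"
    and "non_skipping X \<gamma> i"
    and "list_agreement_test X T"
    and "max_queries T q"
  shows "real (length \<gamma>) / real i \<le> real q"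
proof (cases "i = 0")
  case True
  then show ?thesis by simp
next
  case False
  let ?n = "length \<gamma>"
  show ?thesis
  proof (rule ccontr)
    assume "\<not> ?thesis"
    then have "real q < real ?n / real i" by simp
    then have "real q * real i < real ?n" using False by (simp add: field_simps)
    then have qi: "q * i < ?n" by (metis of_nat_less_iff of_nat_mult)
    have d: "distinct \<gamma>" and n3: "?n \<ge> 3"
      and cyc: "\<forall>k < ?n. {\<gamma> ! k, \<gamma> ! ((k + 1) mod ?n)} \<in> edges X"
      using assms(2) unfolding simple_cycle_def by auto
    have A1: "\<forall>t\<in>set_pmf T. valid_tree X t"
      and A2: "\<forall>L. agreeing X L \<longrightarrow> measure_pmf.prob T {t. run t L} = 1"
      and A3: "\<forall>L. \<not> agreeing X L \<longrightarrow> measure_pmf.prob T {t. \<not> run t L} > 0"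
      using assms(4) unfolding list_agreement_test_def by simp_all
    have nag: "\<not> agreeing X (Lbad \<gamma>)" by (rule bad_nonagree[OF d n3 cyc])
    have "measure_pmf.prob T {t. \<not> run t (Lbad \<gamma>)} > 0"
      using A3[rule_format, OF nag] .
    then have "measure_pmf.prob T {t. \<not> run t (Lbad \<gamma>)} \<noteq> 0" by simp
    then have "set_pmf T \<inter> {t. \<not> run t (Lbad \<gamma>)} \<noteq> {}"
      unfolding measure_pmf_zero_iff .
    then obtain t where t: "t \<in> set_pmf T" "\<not> run t (Lbad \<gamma>)" by blast
    let ?Q = "qset t (Lbad \<gamma>)"
    have Qf: "finite ?Q" and Qc: "card ?Q \<le> nqueries t (Lbad \<gamma>)" using qset_card by blast+
    have "nqueries t (Lbad \<gamma>) \<le> q" using assms(5) t unfolding max_queries_def by blast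
    with Qc have Qq: "card ?Q \<le> q" by simp
    have Qe: "?Q \<subseteq> edges X" using qset_valid A1 t by blast
    define S where "S = (\<Union>e\<in>?Q. {c. c < ?n \<and> skips \<gamma> e c})"
    have each: "card {c. c < ?n \<and> skips \<gamma> e c} \<le> i" if "e \<in> ?Q" for e
    proof (cases "e \<subseteq> set \<gamma>")
      case True
      then show ?thesis using assms(3) Qe that unfolding non_skipping_def by blast
    next
      case False
      then have "{c. c < ?n \<and> skips \<gamma> e c} = {}" using skips_sub by blast
      then show ?thesis by (simp only: card.empty)
    qed
    have "card S \<le> (\<Sum>e\<in>?Q. card {c. c < ?n \<and> skips \<gamma> e c})"
      unfolding S_def by (rule card_UN_le[OF Qf])
    also have "\<dots> \<le> card ?Q * i" using sum_bounded_above[of ?Q "\<lambda>e. card {c. c < ?n \<and> skips \<gamma> e c}" i] each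
      by simp
    also have "\<dots> \<le> q * i" using Qq by simp
    finally have cS: "card S < ?n" using qi by simp
    have Ssub: "S \<subseteq> {..<?n}" unfolding S_def by auto
    have "\<not> {..<?n} \<subseteq> S"
    proof
      assume "{..<?n} \<subseteq> S"
      then have "card {..<?n} \<le> card S" using Ssub by (intro card_mono) (auto intro: finite_subset)
      then show False using cS by simp
    qed
    then obtain c0 where c0: "c0 < ?n" "c0 \<notin> S" by auto
    have "\<forall>e\<in>?Q. answer (Lgood \<gamma> c0) e = answer (Lbad \<gamma>) e"
    proof
      fix e assume eQ: "e \<in> ?Q"
      have "card e = 2" using eQ Qe unfolding edges_def by auto
      moreover have "\<not> skips \<gamma> e c0" using c0 eQ unfolding S_def by auto
      ultimately have "opt1 \<gamma> c0 e \<or> opt2 \<gamma> c0 e" using match_edge[OF d _ c0(1)] by blast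
      then show "answer (Lgood \<gamma> c0) e = answer (Lbad \<gamma>) e" by (rule Lgood_answer)
    qed
    then have "run t (Lgood \<gamma> c0) = run t (Lbad \<gamma>)" by (rule run_same)
    then have nr: "\<not> run t (Lgood \<gamma> c0)" using t by simp
    have "measure_pmf.prob T {t. run t (Lgood \<gamma> c0)} = 1"
      using A2 Lgood_agree by blast
    then have "AE x in measure_pmf T. x \<in> {t. run t (Lgood \<gamma> c0)}"
      by (subst (asm) measure_pmf.prob_eq_1) auto
    then have "\<forall>y\<in>set_pmf T. run y (Lgood \<gamma> c0)" by (simp add: AE_measure_pmf_iff)
    then show False using nr t by blast
  qed
qed

end
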